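(* The orbits of the action $\rho(P,A) = P^T A P$ of $\operatorname{Sp}(4)$ on $S(4,\mathbb{R})$ are exactly the following pairwise distinct sets: (i) for each $p > 0$, $\mathcal{J}_p^{+} = \{\sqrt{p}\,J\}$; (ii) for each $p > 0$, $\mathcal{J}_p^{-} = \{-\sqrt{p}\,J\}$; (iii) for each $p > 0$ and $q \in \mathbb{R}$, $\mathcal{A}_{p,q}^{+} = \{A \in S(4,\mathbb{R}) : A \neq \pm\sqrt{p}\,J,\ \operatorname{Pf}(A) = p,\ \operatorname{s}(A) = q\}$; (iv) for each $p < 0$ and $q \in \mathbb{R}$, $\mathcal{A}_{p,q}^{-} = \{A \in S(4,\mathbb{R}) : \operatorname{Pf}(A) = p,\ \operatorname{s}(A) = q\}$.
   Context: $S(4,\mathbb{R}) = \{A \in M(4,\mathbb{R}) : A^T = -A,\ \det A \neq 0\}$. $J = \operatorname{diag}(J_0,J_0)$ with $J_0 = \begin{bmatrix} 0 & 1 \\ -1 & 0\end{bmatrix}$, and $\operatorname{Sp}(4) = \{P \in M(4,\mathbb{R}) : P^T J P = J\}$. For $A = \begin{bmatrix} 0 & a & b & c \\ -a & 0 & d & e \\ -b & -d & 0 & f \\ -c & -e & -f & 0\end{bmatrix}$, $\operatorname{Pf}(A) = af - be + cd$ and $\operatorname{s}(A) = a + f$. *)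

theory Defs
  imports "HOL-Analysis.Analysis"
begin

(* 4x4 real matrices; indices of type 4 are 0,1,2,3 standing for rows/columns 1,2,3,4 *)
type_synonym mat4 = "real^4^4"

definition S4 :: "mat4 set" where
  "S4 = {A. transpose A = - A \<and> det A \<noteq> 0}"

definition J4 :: mat4 where
  "J4 = (\<chi> i j. if (i = 0 \<and> j = 1) \<or> (i = 2 \<and> j = 3) then 1
                 else if (i = 1 \<and> j = 0) \<or> (i = 3 \<and> j = 2) then -1 else 0)"

definition Sp4 :: "mat4 set" where
  "Sp4 = {P. transpose P ** J4 ** P = J4}"

(* a = A12, b = A13, c = A14, d = A23, e = A24, f = A34 *)
definition Pf :: "mat4 \<Rightarrow> real" where
  "Pf A = A$0$1 * A$2$3 - A$0$2 * A$1$3 + A$0$3 * A$1$2"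

definition strace :: "mat4 \<Rightarrow> real" where
  "strace A = A$0$1 + A$2$3"

definition rho :: "mat4 \<Rightarrow> mat4 \<Rightarrow> mat4" where
  "rho P A = transpose P ** A ** P"

definition orbit :: "mat4 \<Rightarrow> mat4 set" where
  "orbit A = {rho P A | P. P \<in> Sp4}"

datatype orbit_label = JPlus real | JMinus real | APlus real real | AMinus real real

fun valid_label :: "orbit_label \<Rightarrow> bool" where
  "valid_label (JPlus p) = (p > 0)"
| "valid_label (JMinus p) = (p > 0)"
| "valid_label (APlus p q) = (p > 0)"
| "valid_label (AMinus p q) = (p < 0)"

fun orbit_set :: "orbit_label \<Rightarrow> mat4 set" where
  "orbit_set (JPlus p) = {sqrt p *\<^sub>R J4}"
| "orbit_set (JMinus p) = {- (sqrt p *\<^sub>R J4)}"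
| "orbit_set (APlus p q) = {A \<in> S4. A \<noteq> sqrt p *\<^sub>R J4 \<and> A \<noteq> - (sqrt p *\<^sub>R J4)
                                 \<and> Pf A = p \<and> strace A = q}"
| "orbit_set (AMinus p q) = {A \<in> S4. Pf A = p \<and> strace A = q}"

end

theory Submission
  imports Defs
begin

lemma ex4: fixes i :: 4 shows "i = 0 \<or> i = 1 \<or> i = 2 \<or> i = 3"
  using exhaust_4[of i] by auto
lemma UNIV4: "(UNIV::4 set) = {0,1,2,3}" using ex4 by auto
lemma sum4: "sum f (UNIV::4 set) = f 0 + f 1 + f 2 + f 3"
  unfolding UNIV4 by (simp add: ac_simps)

lemma all4: "(\<forall>i::4. P i) \<longleftrightarrow> P 0 \<and> P 1 \<and> P 2 \<and> P 3"
  by (metis ex4)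
lemma vec4_eq: "(x::real^4) = y \<longleftrightarrow> x$0 = y$0 \<and> x$1 = y$1 \<and> x$2 = y$2 \<and> x$3 = y$3"
  unfolding vec_eq_iff all4 ..

lemma mat4_eq: "(X::mat4) = Y \<longleftrightarrow>
  (X$0$0 = Y$0$0 \<and> X$0$1 = Y$0$1 \<and> X$0$2 = Y$0$2 \<and> X$0$3 = Y$0$3 \<and>
   X$1$0 = Y$1$0 \<and> X$1$1 = Y$1$1 \<and> X$1$2 = Y$1$2 \<and> X$1$3 = Y$1$3 \<and>
   X$2$0 = Y$2$0 \<and> X$2$1 = Y$2$1 \<and> X$2$2 = Y$2$2 \<and> X$2$3 = Y$2$3 \<and>
   X$3$0 = Y$3$0 \<and> X$3$1 = Y$3$1 \<and> X$3$2 = Y$3$2 \<and> X$3$3 = Y$3$3)"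
  by (subst vec_eq_iff, simp only: all4 vec4_eq conj_assoc)

definition mk :: "real \<Rightarrow> real \<Rightarrow> real \<Rightarrow> real \<Rightarrow> real \<Rightarrow> real \<Rightarrow> mat4" where
  "mk a b c d e f = (\<chi> i j.
     if i = 0 \<and> j = 1 then a else if i = 1 \<and> j = 0 then -a
     else if i = 0 \<and> j = 2 then b else if i = 2 \<and> j = 0 then -b
     else if i = 0 \<and> j = 3 then c else if i = 3 \<and> j = 0 then -c
     else if i = 1 \<and> j = 2 then d else if i = 2 \<and> j = 1 then -d
     else if i = 1 \<and> j = 3 then e else if i = 3 \<and> j = 1 then -e
     else if i = 2 \<and> j = 3 then f else if i = 3 \<and> j = 2 then -f else 0)"

lemma mk_simps[simp]:
  "mk a b c d e f $0$0 = 0" "mk a b c d e f $0$1 = a" "mk a b c d e f $0$2 = b" "mk a b c d e f $0$3 = c"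
  "mk a b c d e f $1$0 = -a" "mk a b c d e f $1$1 = 0" "mk a b c d e f $1$2 = d" "mk a b c d e f $1$3 = e"
  "mk a b c d e f $2$0 = -b" "mk a b c d e f $2$1 = -d" "mk a b c d e f $2$2 = 0" "mk a b c d e f $2$3 = f"
  "mk a b c d e f $3$0 = -c" "mk a b c d e f $3$1 = -e" "mk a b c d e f $3$2 = -f" "mk a b c d e f $3$3 = 0"
  by (simp_all add: mk_def)

lemma J4_mk: "J4 = mk 1 0 0 0 0 1"
  by (simp add: mat4_eq J4_def)

definition skew :: "mat4 \<Rightarrow> bool" where "skew X \<longleftrightarrow> transpose X = - X"

lemma skew_entry: "skew X \<Longrightarrow> X$j$i = - X$i$j"
proof -
  assume h: "skew X"
  have "(transpose X)$i$j = (-X)$i$j" using h unfolding skew_def by simp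
  then show ?thesis by (simp add: transpose_def)
qed

lemma skew_diag: "skew X \<Longrightarrow> X$i$i = 0"
  using skew_entry[of X i i] by simp

lemma skew_mk: "skew X \<Longrightarrow> X = mk (X$0$1) (X$0$2) (X$0$3) (X$1$2) (X$1$3) (X$2$3)"
  unfolding mat4_eq mk_simps
  by (simp add: skew_diag skew_entry[of X 0 1] skew_entry[of X 0 2] skew_entry[of X 0 3]
     skew_entry[of X 1 2] skew_entry[of X 1 3] skew_entry[of X 2 3])

lemma skew_mk2: "skew (mk a b c d e f)"
  unfolding skew_def mat4_eq by (simp add: transpose_def)

lemma mult_entry: "((X::mat4) ** Y)$i$j = X$i$0 * Y$0$j + X$i$1 * Y$1$j + X$i$2 * Y$2$j + X$i$3 * Y$3$j"
  by (simp add: matrix_matrix_mult_def sum4)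

lemma mat1_entry: "(mat 1 :: mat4)$i$j = (if i = j then 1 else 0)"
  by (simp add: mat_def)

lemma JJ: "J4 ** J4 = - mat 1"
  by (simp add: mat4_eq mult_entry J4_mk mat1_entry)

definition Mof :: "mat4 \<Rightarrow> mat4" where "Mof X = - (J4 ** X)"

lemma quad: "skew A \<Longrightarrow> Mof A ** Mof A - strace A *\<^sub>R Mof A = - (Pf A *\<^sub>R mat 1)"
  apply (subst (1 2 3 4 5) skew_mk[of A], assumption)
  by (simp add: mat4_eq mult_entry J4_mk mat1_entry Mof_def Pf_def strace_def algebra_simps)

lemma mm_neg_l: "(- (A::mat4)) ** (B::mat4) = - (A ** B)" by (subst mat4_eq) (simp add: mult_entry)
lemma mm_neg_r: "(A::mat4) ** (- (B::mat4)) = - (A ** B)" by (subst mat4_eq) (simp add: mult_entry)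
lemma mm_scale_l: "(c *\<^sub>R (A::mat4)) ** (B::mat4) = c *\<^sub>R (A ** B)" by (subst mat4_eq) (simp add: mult_entry algebra_simps)
lemma mm_scale_r: "(A::mat4) ** (c *\<^sub>R (B::mat4)) = c *\<^sub>R (A ** B)" by (subst mat4_eq) (simp add: mult_entry algebra_simps)
lemma mm_diff_l: "(A::mat4) ** ((B::mat4) - C) = A ** B - A ** C" by (subst mat4_eq) (simp add: mult_entry algebra_simps)
lemma mm_diff_r: "((B::mat4) - C) ** (A::mat4) = B ** A - C ** A" by (subst mat4_eq) (simp add: mult_entry algebra_simps)

definition Linv :: "mat4 \<Rightarrow> mat4" where "Linv P = - (J4 ** transpose P ** J4)"

lemma sp_left: assumes "P \<in> Sp4" shows "Linv P ** P = mat 1"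
proof -
  have "(J4 ** transpose P ** J4) ** P = J4 ** (transpose P ** J4 ** P)" by (simp add: matrix_mul_assoc)
  also have "\<dots> = J4 ** J4" using assms by (simp add: Sp4_def)
  finally show ?thesis by (simp add: Linv_def mm_neg_l JJ)
qed

lemma sp_right: "P \<in> Sp4 \<Longrightarrow> P ** Linv P = mat 1"
  using sp_left matrix_left_right_inverse by blast

lemma sp_PJPt: assumes "P \<in> Sp4" shows "P ** J4 ** transpose P = J4"
proof -
  define X where "X = P ** J4 ** transpose P"
  have "P ** Linv P = - (X ** J4)" by (simp add: Linv_def X_def mm_neg_r matrix_mul_assoc)
  then have XJ: "X ** J4 = - mat 1" using sp_right[OF assms] by (metis minus_minus)
  have "X = - (X ** (J4 ** J4))" by (simp add: JJ mm_neg_r)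
  also have "\<dots> = J4" by (simp add: matrix_mul_assoc XJ mm_neg_l)
  finally show ?thesis by (simp add: X_def)
qed

lemma sp_id: "mat 1 \<in> Sp4" by (simp add: Sp4_def)
lemma rho_id: "rho (mat 1) A = A" by (simp add: rho_def)

lemma sp_mult: assumes "P \<in> Sp4" "Q \<in> Sp4" shows "P ** Q \<in> Sp4"
proof -
  have "transpose (P ** Q) ** J4 ** (P ** Q) = transpose Q ** (transpose P ** J4 ** P) ** Q"
    by (simp add: matrix_transpose_mul matrix_mul_assoc)
  also have "\<dots> = J4" using assms by (simp add: Sp4_def)
  finally show ?thesis by (simp add: Sp4_def)
qed

lemma rho_mult: "rho Q (rho P A) = rho (P ** Q) A"
  by (simp add: rho_def matrix_transpose_mul matrix_mul_assoc)

lemma sp_Linv: assumes "P \<in> Sp4" shows "Linv P \<in> Sp4"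
proof -
  have "transpose (Linv P) ** J4 ** Linv P = transpose (P ** Linv P) ** J4 ** (P ** Linv P)"
  proof -
    have "transpose (P ** Linv P) ** J4 ** (P ** Linv P) = transpose (Linv P) ** (transpose P ** J4 ** P) ** Linv P"
      by (simp add: matrix_transpose_mul matrix_mul_assoc)
    then show ?thesis using assms by (simp add: Sp4_def)
  qed
  also have "\<dots> = J4" using sp_right[OF assms] by simp
  finally show ?thesis by (simp add: Sp4_def)
qed

lemma rho_Linv: assumes "P \<in> Sp4" shows "rho (Linv P) (rho P A) = A"
  by (simp add: rho_mult sp_right[OF assms] rho_id)

lemma skew_rho: "skew A \<Longrightarrow> skew (rho P A)"
  unfolding skew_def rho_def by (simp add: matrix_transpose_mul matrix_mul_assoc mm_neg_l mm_neg_r)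

lemma Mof_rho: assumes "P \<in> Sp4" shows "Mof (rho P A) = Linv P ** Mof A ** P"
proof -
  have "P ** Mof (rho P A) = - ((P ** J4 ** transpose P) ** A ** P)"
    by (simp add: Mof_def rho_def mm_neg_r matrix_mul_assoc)
  also have "\<dots> = Mof A ** P" using sp_PJPt[OF assms] by (simp add: Mof_def mm_neg_l)
  finally have h: "P ** Mof (rho P A) = Mof A ** P" .
  have "Mof (rho P A) = Linv P ** (P ** Mof (rho P A))"
    by (simp add: matrix_mul_assoc sp_left[OF assms])
  also have "\<dots> = Linv P ** Mof A ** P" by (simp add: h matrix_mul_assoc)
  finally show ?thesis .
qed

lemma trace_Mof: "skew A \<Longrightarrow> trace (Mof A) = 2 * strace A"
  apply (subst skew_mk[of A], assumption)
  by (simp add: trace_def sum4 Mof_def mult_entry J4_mk strace_def)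

lemma strace_rho: assumes "P \<in> Sp4" "skew A" shows "strace (rho P A) = strace A"
proof -
  have "trace (Mof (rho P A)) = trace (Linv P ** (Mof A ** P))"
    by (simp add: Mof_rho[OF assms(1)] matrix_mul_assoc)
  also have "\<dots> = trace ((Mof A ** P) ** Linv P)" by (rule trace_mul_sym)
  also have "\<dots> = trace (Mof A)" by (simp add: sp_right[OF assms(1)] flip: matrix_mul_assoc)
  finally show ?thesis using trace_Mof[OF assms(2)] trace_Mof[OF skew_rho[OF assms(2)]] by simp
qed

lemma Pf_rho: assumes "P \<in> Sp4" "skew A" shows "Pf (rho P A) = Pf A"
proof -
  let ?L = "Linv P" and ?M = "Mof A" and ?s = "strace A"
  have M': "Mof (rho P A) = ?L ** ?M ** P" by (rule Mof_rho[OF assms(1)])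
  have "Mof (rho P A) ** Mof (rho P A) = ?L ** ?M ** (P ** ?L) ** ?M ** P"
    by (simp add: M' matrix_mul_assoc)
  also have "\<dots> = ?L ** ?M ** ?M ** P" by (simp add: sp_right[OF assms(1)])
  also have "\<dots> = ?L ** (?M ** ?M) ** P" by (simp add: matrix_mul_assoc)
  finally have sq: "Mof (rho P A) ** Mof (rho P A) = ?L ** (?M ** ?M) ** P" .
  have "Mof (rho P A) ** Mof (rho P A) - ?s *\<^sub>R Mof (rho P A) = ?L ** (?M ** ?M - ?s *\<^sub>R ?M) ** P"
    by (simp only: sq) (simp add: M' mm_diff_l mm_diff_r mm_scale_l mm_scale_r)
  also have "\<dots> = ?L ** (- (Pf A *\<^sub>R mat 1)) ** P" using quad[OF assms(2)] by simp
  also have "\<dots> = - (Pf A *\<^sub>R mat 1)" by (simp add: mm_neg_l mm_neg_r mm_scale_l mm_scale_r sp_left[OF assms(1)])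
  finally have h1: "Mof (rho P A) ** Mof (rho P A) - ?s *\<^sub>R Mof (rho P A) = - (Pf A *\<^sub>R mat 1)" .
  have h2: "Mof (rho P A) ** Mof (rho P A) - ?s *\<^sub>R Mof (rho P A) = - (Pf (rho P A) *\<^sub>R mat 1)"
    using quad[OF skew_rho[OF assms(2)], of P] strace_rho[OF assms] by simp
  have "Pf (rho P A) = Pf A \<or> (mat 1::mat4) = 0" using h1 h2 by simp
  moreover have "(mat 1::mat4) \<noteq> 0"
  proof
    assume "(mat 1::mat4) = 0"
    then have "(mat 1::mat4)$0$0 = 0" by simp
    then show False by (simp add: mat1_entry)
  qed
  ultimately show ?thesis by blast
qed

lemma det_sp: assumes "P \<in> Sp4" shows "det P \<noteq> 0"
proof -
  have "det (Linv P) * det P = 1" using sp_left[OF assms] det_mul[of "Linv P" P] by simp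
  then show ?thesis by auto
qed

lemma S4_skew: "A \<in> S4 \<longleftrightarrow> skew A \<and> det A \<noteq> 0" by (simp add: S4_def skew_def)

lemma S4_rho: assumes "P \<in> Sp4" "A \<in> S4" shows "rho P A \<in> S4"
  using assms det_sp[OF assms(1)] skew_rho[of A P]
  by (simp add: S4_skew rho_def det_mul det_transpose)


definition vec4 :: "real \<Rightarrow> real \<Rightarrow> real \<Rightarrow> real \<Rightarrow> real^4" where
  "vec4 x0 x1 x2 x3 = (\<chi> i. if i = 0 then x0 else if i = 1 then x1 else if i = 2 then x2 else x3)"

lemma vec4_simps[simp]: "vec4 x0 x1 x2 x3 $ 0 = x0" "vec4 x0 x1 x2 x3 $ 1 = x1"
  "vec4 x0 x1 x2 x3 $ 2 = x2" "vec4 x0 x1 x2 x3 $ 3 = x3"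
  by (simp_all add: vec4_def)

definition bil :: "mat4 \<Rightarrow> real^4 \<Rightarrow> real^4 \<Rightarrow> real" where
  "bil S x y = (\<Sum>k\<in>UNIV. \<Sum>l\<in>UNIV. x$k * S$k$l * y$l)"

lemma bil_expand: "bil S x y =
   x$0 * S$0$0 * y$0 + x$0 * S$0$1 * y$1 + x$0 * S$0$2 * y$2 + x$0 * S$0$3 * y$3 +
   x$1 * S$1$0 * y$0 + x$1 * S$1$1 * y$1 + x$1 * S$1$2 * y$2 + x$1 * S$1$3 * y$3 +
   x$2 * S$2$0 * y$0 + x$2 * S$2$1 * y$1 + x$2 * S$2$2 * y$2 + x$2 * S$2$3 * y$3 +
   x$3 * S$3$0 * y$0 + x$3 * S$3$1 * y$1 + x$3 * S$3$2 * y$2 + x$3 * S$3$3 * y$3"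
  by (simp add: bil_def sum4 algebra_simps)

lemma bil_add_l[simp]: "bil S (x + y) z = bil S x z + bil S y z"
  by (simp add: bil_expand algebra_simps)
lemma bil_add_r[simp]: "bil S z (x + y) = bil S z x + bil S z y"
  by (simp add: bil_expand algebra_simps)
lemma bil_scale_l[simp]: "bil S (c *\<^sub>R x) z = c * bil S x z"
  by (simp add: bil_expand algebra_simps)
lemma bil_scale_r[simp]: "bil S z (c *\<^sub>R x) = c * bil S z x"
  by (simp add: bil_expand algebra_simps)

lemma bil_diff_l[simp]: "bil S (x - y) z = bil S x z - bil S y z"
  by (simp add: bil_expand algebra_simps)
lemma bil_diff_r[simp]: "bil S z (x - y) = bil S z x - bil S z y"
  by (simp add: bil_expand algebra_simps)

lemma bil_skew: "skew S \<Longrightarrow> bil S x y = - bil S y x"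
  apply (subst (1 2) skew_mk[of S], assumption)
  by (simp add: bil_expand algebra_simps)

lemma bil_skew0: "skew S \<Longrightarrow> bil S x x = 0"
  using bil_skew[of S x x] by simp

definition jt :: "real^4 \<Rightarrow> real^4" where "jt w = vec4 (- w$1) (w$0) (- w$3) (w$2)"

lemma bil_jt: "bil J4 x (jt w) = x \<bullet> w"
  by (simp add: bil_expand jt_def J4_mk inner_vec_def sum4)

lemma rho_bil: "rho (\<chi> i j. w j $ i) S $ i $ j = bil S (w i) (w j)"
  by (simp add: rho_def mult_entry transpose_def bil_expand algebra_simps)

lemma skew_eq: assumes "skew X" "skew Y" "X$0$1 = Y$0$1" "X$0$2 = Y$0$2" "X$0$3 = Y$0$3"
  "X$1$2 = Y$1$2" "X$1$3 = Y$1$3" "X$2$3 = Y$2$3" shows "X = Y"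
  using skew_mk[OF assms(1)] skew_mk[OF assms(2)] assms(3-) by simp

lemma skew_J4: "skew J4" by (simp add: J4_mk skew_mk2)
lemma J4_e: "J4$0$1 = 1" "J4$0$2 = 0" "J4$0$3 = 0" "J4$1$2 = 0" "J4$1$3 = 0" "J4$2$3 = 1"
  by (simp_all add: J4_mk)

locale prm = fixes a b c d e f :: real
begin

definition h where "h = (a - f) / 2"
definition Bm where "Bm = mk h b c d e (- h)"
definition Kf :: "real^4 \<Rightarrow> real^4" where
  "Kf x = vec4 (h * x$0 - d * x$2 - e * x$3) (h * x$1 + b * x$2 + c * x$3)
               (c * x$0 + e * x$1 - h * x$2) (- b * x$0 - d * x$1 - h * x$3)"
definition dl where "dl = h^2 + b * e - c * d"

lemma skew_Bm: "skew Bm" by (simp add: Bm_def skew_mk2)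

lemma bil_J_K: "bil J4 x (Kf y) = bil Bm x y"
  by (simp add: bil_expand J4_mk Bm_def Kf_def algebra_simps)
lemma bil_K_J: "bil J4 (Kf x) y = bil Bm x y"
  by (simp add: bil_expand J4_mk Bm_def Kf_def algebra_simps)
lemma KK: "Kf (Kf x) = dl *\<^sub>R x"
  by (simp add: vec4_eq Kf_def dl_def power2_eq_square algebra_simps)
lemma B_K: "bil Bm x (Kf y) = dl * bil J4 x y"
  by (metis KK bil_J_K bil_scale_r)
lemma K_B: "bil Bm (Kf x) y = dl * bil J4 x y"
  using B_K[of y x] bil_skew[OF skew_Bm, of "Kf x" y] bil_skew[OF skew_J4, of y x] by simp
lemma bil_A: "bil (mk a b c d e f) x y = bil Bm x y + ((a + f) / 2) * bil J4 x y"
  by (simp add: bil_expand J4_mk Bm_def h_def field_simps)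


lemma construct:
  assumes D: "(u \<bullet> u) * (Kf u \<bullet> Kf u) - (u \<bullet> Kf u)^2 \<noteq> 0"
  shows "\<exists>Q\<in>Sp4. rho Q (mk a b c d e f) = mk ((a+f)/2) 0 1 (- dl) 0 ((a+f)/2)"
proof -
  define v where "v = Kf u"
  define DD where "DD = (u \<bullet> u) * (v \<bullet> v) - (u \<bullet> v)^2"
  have DD: "DD \<noteq> 0" using D by (simp add: DD_def v_def)
  define y' where "y' = (1/DD) *\<^sub>R ((v \<bullet> v) *\<^sub>R u - (u \<bullet> v) *\<^sub>R v)"
  define z' where "z' = (1/DD) *\<^sub>R ((u \<bullet> u) *\<^sub>R v - (u \<bullet> v) *\<^sub>R u)"
  have uy': "u \<bullet> y' = 1"
  proof -
    have "u \<bullet> y' = (1/DD) * ((v \<bullet> v) * (u \<bullet> u) - (u \<bullet> v) * (u \<bullet> v))"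
      by (simp add: y'_def inner_diff_right algebra_simps inner_commute)
    also have "\<dots> = (1/DD) * DD" by (simp add: DD_def power2_eq_square)
    finally show ?thesis using DD by simp
  qed
  have vy': "v \<bullet> y' = 0"
    by (simp add: y'_def inner_diff_right algebra_simps inner_commute)
  have uz': "u \<bullet> z' = 0"
    by (simp add: z'_def inner_diff_right algebra_simps inner_commute)
  have vz': "v \<bullet> z' = 1"
  proof -
    have "v \<bullet> z' = (1/DD) * ((u \<bullet> u) * (v \<bullet> v) - (u \<bullet> v) * (u \<bullet> v))"
      by (simp add: z'_def inner_diff_right algebra_simps inner_commute)
    also have "\<dots> = (1/DD) * DD" by (simp add: DD_def power2_eq_square)
    finally show ?thesis using DD by simp
  qed
  define y where "y = jt y'"
  define z where "z = jt z'"
  have Juy: "bil J4 u y = 1" by (simp add: y_def bil_jt uy')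
  have Jvy: "bil J4 v y = 0" by (simp add: y_def bil_jt vy')
  have Juz: "bil J4 u z = 0" by (simp add: z_def bil_jt uz')
  have Jvz: "bil J4 v z = 1" by (simp add: z_def bil_jt vz')
  have Buy: "bil Bm u y = 0" using Jvy by (simp add: v_def bil_K_J)
  have Buz: "bil Bm u z = 1" using Jvz by (simp add: v_def bil_K_J)
  have Juu: "bil J4 u u = 0" by (rule bil_skew0[OF skew_J4])
  have Buu: "bil Bm u u = 0" by (rule bil_skew0[OF skew_Bm])
  have Juv: "bil J4 u v = 0" using Buu by (simp add: v_def bil_J_K)
  have Jvu: "bil J4 v u = 0" using Juv bil_skew[OF skew_J4, of v u] by simp
  have Jyu: "bil J4 y u = -1" using Juy bil_skew[OF skew_J4, of y u] by simp
  have Jyv: "bil J4 y v = 0" using Jvy bil_skew[OF skew_J4, of y v] by simp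
  have Byu: "bil Bm y u = 0" using Buy bil_skew[OF skew_Bm, of y u] by simp
  define \<beta> where "\<beta> = bil J4 y z"
  define \<kappa> where "\<kappa> = - bil Bm y z"
  define w0 where "w0 = u"
  define w1 where "w1 = y + \<kappa> *\<^sub>R u"
  define w2 where "w2 = v"
  define w3 where "w3 = z + \<beta> *\<^sub>R u"
  have J01: "bil J4 w0 w1 = 1" by (simp add: w0_def w1_def Juy Juu)
  have J02: "bil J4 w0 w2 = 0" by (simp add: w0_def w2_def Juv)
  have J03: "bil J4 w0 w3 = 0" by (simp add: w0_def w3_def Juz Juu)
  have J12: "bil J4 w1 w2 = 0" by (simp add: w1_def w2_def Jyv Juv)
  have J13: "bil J4 w1 w3 = 0" by (simp add: w1_def w3_def Jyu Juz Juu \<beta>_def)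
  have J23: "bil J4 w2 w3 = 1" by (simp add: w2_def w3_def Jvz Jvu)
  have B01: "bil Bm w0 w1 = 0" by (simp add: w0_def w1_def Buy Buu)
  have B02: "bil Bm w0 w2 = 0" by (simp add: w0_def w2_def v_def B_K Juu)
  have B03: "bil Bm w0 w3 = 1" by (simp add: w0_def w3_def Buz Buu)
  have B12: "bil Bm w1 w2 = - dl" by (simp add: w2_def v_def B_K w1_def Jyu Juu)
  have B13: "bil Bm w1 w3 = 0" by (simp add: w1_def w3_def Byu Buz Buu \<kappa>_def)
  have B23: "bil Bm w2 w3 = 0" by (simp add: w2_def v_def K_B w3_def Juz Juu)
  define w where "w = (\<lambda>j::4. if j = 0 then w0 else if j = 1 then w1 else if j = 2 then w2 else w3)"
  have w: "w 0 = w0" "w 1 = w1" "w 2 = w2" "w 3 = w3" by (simp_all add: w_def)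
  define Q where "Q = (\<chi> i j. w j $ i)"
  have QJ: "rho Q J4 = J4"
    by (rule skew_eq) (simp_all add: skew_rho skew_J4 Q_def rho_bil w J01 J02 J03 J12 J13 J23 J4_e)
  have "Q \<in> Sp4" using QJ by (simp add: Sp4_def rho_def)
  moreover have "rho Q (mk a b c d e f) = mk ((a+f)/2) 0 1 (- dl) 0 ((a+f)/2)"
    by (rule skew_eq) (simp_all add: skew_rho skew_mk2 Q_def rho_bil w bil_A J01 J02 J03 J12 J13 J23 B01 B02 B03 B12 B13 B23)
  ultimately show ?thesis by blast
qed


lemma exists_u:
  assumes "\<not> (a = f \<and> b = 0 \<and> c = 0 \<and> d = 0 \<and> e = 0)"
  shows "\<exists>u. (u \<bullet> u) * (Kf u \<bullet> Kf u) - (u \<bullet> Kf u)^2 \<noteq> 0"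
proof -
  have D1: "(vec4 1 0 0 0 \<bullet> vec4 1 0 0 0) * (Kf (vec4 1 0 0 0) \<bullet> Kf (vec4 1 0 0 0))
      - (vec4 1 0 0 0 \<bullet> Kf (vec4 1 0 0 0))^2 = b^2 + c^2"
    by (simp add: Kf_def inner_vec_def sum4 power2_eq_square algebra_simps)
  have D2: "(vec4 0 1 0 0 \<bullet> vec4 0 1 0 0) * (Kf (vec4 0 1 0 0) \<bullet> Kf (vec4 0 1 0 0))
      - (vec4 0 1 0 0 \<bullet> Kf (vec4 0 1 0 0))^2 = d^2 + e^2"
    by (simp add: Kf_def inner_vec_def sum4 power2_eq_square algebra_simps)
  have D3: "(vec4 1 0 1 0 \<bullet> vec4 1 0 1 0) * (Kf (vec4 1 0 1 0) \<bullet> Kf (vec4 1 0 1 0))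
      - (vec4 1 0 1 0 \<bullet> Kf (vec4 1 0 1 0))^2 = 2 * ((h-d)^2 + b^2 + (c-h)^2 + b^2) - (c - d)^2"
    by (simp add: Kf_def inner_vec_def sum4 power2_eq_square algebra_simps)
  show ?thesis
  proof (cases "b \<noteq> 0 \<or> c \<noteq> 0")
    case True
    then show ?thesis using D1 by (metis sum_power2_eq_zero_iff)
  next
    case F1: False
    show ?thesis
    proof (cases "d \<noteq> 0 \<or> e \<noteq> 0")
      case True
      then show ?thesis using D2 by (metis sum_power2_eq_zero_iff)
    next
      case False
      then have "h \<noteq> 0" using F1 assms by (auto simp: h_def)
      then show ?thesis using D3 F1 False by (intro exI[of _ "vec4 1 0 1 0"]) auto
    qed
  qed
qed

end

definition NFm :: "real \<Rightarrow> real \<Rightarrow> mat4" where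
  "NFm p q = mk (q/2) 0 1 (p - q^2/4) 0 (q/2)"

lemma CL:
  assumes "skew A" "\<not> (A$0$1 = A$2$3 \<and> A$0$2 = 0 \<and> A$0$3 = 0 \<and> A$1$2 = 0 \<and> A$1$3 = 0)"
  shows "\<exists>Q\<in>Sp4. rho Q A = NFm (Pf A) (strace A)"
proof -
  define a where "a = A$0$1"
  define b where "b = A$0$2"
  define c where "c = A$0$3"
  define d where "d = A$1$2"
  define e where "e = A$1$3"
  define f where "f = A$2$3"
  have A: "A = mk a b c d e f" using skew_mk[OF assms(1)] by (simp add: a_def b_def c_def d_def e_def f_def)
  obtain u where "(u \<bullet> u) * (prm.Kf a b c d e f u \<bullet> prm.Kf a b c d e f u) - (u \<bullet> prm.Kf a b c d e f u)^2 \<noteq> 0"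
    using prm.exists_u[of a f b c d e] assms(2) by (auto simp: a_def b_def c_def d_def e_def f_def)
  then obtain Q where Q: "Q \<in> Sp4" "rho Q (mk a b c d e f) = mk ((a+f)/2) 0 1 (- prm.dl a b c d e f) 0 ((a+f)/2)"
    using prm.construct by blast
  have dl: "- prm.dl a b c d e f = (a*f - b*e + c*d) - (a+f)^2/4"
    unfolding prm.dl_def prm.h_def by (simp add: field_simps power2_eq_square)
  have "mk ((a+f)/2) 0 1 (- prm.dl a b c d e f) 0 ((a+f)/2) = NFm (Pf A) (strace A)"
    by (simp only: dl) (simp add: A NFm_def Pf_def strace_def)
  then show ?thesis using Q A by auto
qed

lemma orbit_self: "A \<in> orbit A"
  unfolding orbit_def using sp_id rho_id[of A] by force

lemma orbit_sym: "B \<in> orbit A \<Longrightarrow> A \<in> orbit B"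
proof -
  assume "B \<in> orbit A"
  then obtain P where "P \<in> Sp4" "B = rho P A" by (auto simp: orbit_def)
  then have "Linv P \<in> Sp4" "A = rho (Linv P) B" using sp_Linv rho_Linv by auto
  then show ?thesis unfolding orbit_def by blast
qed

lemma orbit_trans: "B \<in> orbit A \<Longrightarrow> C \<in> orbit B \<Longrightarrow> C \<in> orbit A"
proof -
  assume "B \<in> orbit A" "C \<in> orbit B"
  then obtain P Q where "P \<in> Sp4" "B = rho P A" "Q \<in> Sp4" "C = rho Q B" by (auto simp: orbit_def)
  then have "P ** Q \<in> Sp4" "C = rho (P ** Q) A" using sp_mult rho_mult by auto
  then show ?thesis unfolding orbit_def by blast
qed

lemma orbit_eq: "B \<in> orbit A \<Longrightarrow> orbit B = orbit A"
  using orbit_sym orbit_trans by blast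

definition Adual :: "mat4 \<Rightarrow> mat4" where
  "Adual A = mk (- A$2$3) (A$1$3) (- A$1$2) (- A$0$3) (A$0$2) (- A$0$1)"

lemma A_Adual: "skew A \<Longrightarrow> A ** Adual A = Pf A *\<^sub>R mat 1"
  apply (subst (1 3) skew_mk[of A], assumption)
  by (subst mat4_eq) (simp add: Adual_def mult_entry mat1_entry Pf_def algebra_simps)

lemma Pf_nz: assumes "A \<in> S4" shows "Pf A \<noteq> 0"
proof
  assume P0: "Pf A = 0"
  have sk: "skew A" and dA: "det A \<noteq> 0" using assms by (auto simp: S4_skew)
  then obtain Ai where Ai: "Ai ** A = mat 1" using invertible_det_nz invertible_left_inverse by blast
  have "Adual A = Ai ** (A ** Adual A)" by (simp add: matrix_mul_assoc Ai)
  also have "\<dots> = 0" using A_Adual[OF sk] P0 by simp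
  finally have "Adual A = 0" .
  then have z: "(Adual A)$0$1 = 0" "(Adual A)$0$2 = 0" "(Adual A)$0$3 = 0"
     "(Adual A)$1$2 = 0" "(Adual A)$1$3 = 0" "(Adual A)$2$3 = 0" by simp_all
  have "A = 0"
    apply (subst skew_mk[OF sk])
    using z by (subst mat4_eq) (simp add: Adual_def)
  moreover have "det (0::mat4) = 0"
  proof -
    have "(0::mat4) = mat 0" by (simp add: vec_eq_iff mat_def)
    then show ?thesis by (metis det_0)
  qed
  ultimately show False using dA by simp
qed

lemma mk_S4: assumes "Pf (mk a b c d e f) \<noteq> 0" shows "mk a b c d e f \<in> S4"
proof -
  let ?A = "mk a b c d e f"
  have "?A ** ((1 / Pf ?A) *\<^sub>R Adual ?A) = mat 1"
    using A_Adual[OF skew_mk2] assms by (simp add: mm_scale_r)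
  then have "invertible ?A" using invertible_right_inverse by blast
  then show ?thesis by (simp add: S4_skew skew_mk2 invertible_det_nz)
qed


lemma J4_scale: "c *\<^sub>R J4 = mk c 0 0 0 0 c" by (subst mat4_eq) (simp add: J4_mk)
lemma J4_scale_neg: "- (c *\<^sub>R J4) = mk (-c) 0 0 0 0 (-c)" by (subst mat4_eq) (simp add: J4_mk)

lemma Pf_mk: "Pf (mk a b c d e f) = a * f - b * e + c * d" by (simp add: Pf_def)
lemma strace_mk: "strace (mk a b c d e f) = a + f" by (simp add: strace_def)

lemma rho_scaleJ: "P \<in> Sp4 \<Longrightarrow> rho P (c *\<^sub>R J4) = c *\<^sub>R J4"
  by (simp add: rho_def mm_scale_l mm_scale_r Sp4_def)

lemma orbit_scaleJ: "orbit (c *\<^sub>R J4) = {c *\<^sub>R J4}"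
  using orbit_self[of "c *\<^sub>R J4"] by (auto simp: orbit_def rho_scaleJ)

lemma orbit_scaleJ_neg: "orbit (- (c *\<^sub>R J4)) = {- (c *\<^sub>R J4)}"
  using orbit_scaleJ[of "- c"] by simp

fun nf :: "orbit_label \<Rightarrow> mat4" where
  "nf (JPlus p) = sqrt p *\<^sub>R J4"
| "nf (JMinus p) = (- sqrt p) *\<^sub>R J4"
| "nf (APlus p q) = NFm p q"
| "nf (AMinus p q) = NFm p q"

lemma not_scalar:
  assumes "skew A" "A$0$1 = A$2$3 \<and> A$0$2 = 0 \<and> A$0$3 = 0 \<and> A$1$2 = 0 \<and> A$1$3 = 0"
  shows "\<exists>a. A = a *\<^sub>R J4 \<and> Pf A = a^2"
proof -
  obtain a where a: "a = A$0$1" by simp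
  have "A = mk a 0 0 0 0 a" using skew_mk[OF assms(1)] assms(2) a by simp
  then have "A = a *\<^sub>R J4 \<and> Pf A = a^2" by (simp add: J4_scale Pf_mk power2_eq_square)
  then show ?thesis by blast
qed

lemma orbit_NFm:
  assumes "p \<noteq> 0"
  shows "NFm p q \<in> S4"
    and "orbit (NFm p q) = {A \<in> S4. A \<noteq> sqrt p *\<^sub>R J4 \<and> A \<noteq> - (sqrt p *\<^sub>R J4) \<and> Pf A = p \<and> strace A = q}"
proof -
  have PN: "Pf (NFm p q) = p" by (simp add: NFm_def Pf_mk power2_eq_square field_simps)
  have SN: "strace (NFm p q) = q" by (simp add: NFm_def strace_mk)
  show S: "NFm p q \<in> S4" unfolding NFm_def by (rule mk_S4) (use PN assms in \<open>simp add: NFm_def\<close>)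
  have skN: "skew (NFm p q)" by (simp add: NFm_def skew_mk2)
  have neq: "NFm p q \<noteq> c *\<^sub>R J4" for c
  proof
    assume "NFm p q = c *\<^sub>R J4"
    then have "(NFm p q)$0$3 = (c *\<^sub>R J4)$0$3" by simp
    then show False by (simp add: NFm_def J4_scale)
  qed
  show "orbit (NFm p q) = {A \<in> S4. A \<noteq> sqrt p *\<^sub>R J4 \<and> A \<noteq> - (sqrt p *\<^sub>R J4) \<and> Pf A = p \<and> strace A = q}"
  proof (intro set_eqI iffI)
    fix B assume B: "B \<in> orbit (NFm p q)"
    then obtain P where P: "P \<in> Sp4" "B = rho P (NFm p q)" by (auto simp: orbit_def)
    have "B \<in> S4" using S4_rho[OF P(1) S] P(2) by simp
    moreover have "Pf B = p" using Pf_rho[OF P(1) skN] P(2) PN by simp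
    moreover have "strace B = q" using strace_rho[OF P(1) skN] P(2) SN by simp
    moreover have "B \<noteq> c *\<^sub>R J4" for c
    proof
      assume "B = c *\<^sub>R J4"
      then have "NFm p q \<in> orbit (c *\<^sub>R J4)" using orbit_sym[OF B] by simp
      then show False using neq[of c] by (simp add: orbit_scaleJ)
    qed
    moreover have "B \<noteq> - (sqrt p *\<^sub>R J4)" using calculation(4)[of "- sqrt p"] by simp
    ultimately show "B \<in> {A \<in> S4. A \<noteq> sqrt p *\<^sub>R J4 \<and> A \<noteq> - (sqrt p *\<^sub>R J4) \<and> Pf A = p \<and> strace A = q}"
      by blast
  next
    fix A assume A: "A \<in> {A \<in> S4. A \<noteq> sqrt p *\<^sub>R J4 \<and> A \<noteq> - (sqrt p *\<^sub>R J4) \<and> Pf A = p \<and> strace A = q}"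
    then have skA: "skew A" by (simp add: S4_skew)
    have ns: "\<not> (A$0$1 = A$2$3 \<and> A$0$2 = 0 \<and> A$0$3 = 0 \<and> A$1$2 = 0 \<and> A$1$3 = 0)"
    proof
      assume h: "A$0$1 = A$2$3 \<and> A$0$2 = 0 \<and> A$0$3 = 0 \<and> A$1$2 = 0 \<and> A$1$3 = 0"
      obtain a where A1: "A = a *\<^sub>R J4" and A2: "Pf A = a^2" using not_scalar[OF skA h] by blast
      have "a^2 = p" using A2 A by simp
      then have "sqrt p = \<bar>a\<bar>" by auto
      then have "a = sqrt p \<or> a = - sqrt p" by auto
      then show False using A A1 by auto
    qed
    obtain Q where Q: "Q \<in> Sp4" "rho Q A = NFm (Pf A) (strace A)" using CL[OF skA ns] by blast
    then have "NFm p q = rho Q A" using A by simp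
    then have "NFm p q \<in> orbit A" unfolding orbit_def using Q(1) by blast
    then show "A \<in> orbit (NFm p q)" by (rule orbit_sym)
  qed
qed

lemma L:
  assumes "valid_label l"
  shows "nf l \<in> S4 \<and> orbit_set l = orbit (nf l)"
proof (cases l)
  case (JPlus p)
  then have p: "p > 0" using assms by simp
  have "Pf (sqrt p *\<^sub>R J4) = p" using p by (simp add: J4_scale Pf_mk power2_eq_square[symmetric])
  then have "sqrt p *\<^sub>R J4 \<in> S4" using p by (simp add: J4_scale mk_S4)
  then show ?thesis using JPlus by (simp add: orbit_scaleJ)
next
  case (JMinus p)
  then have p: "p > 0" using assms by simp
  have "Pf ((- sqrt p) *\<^sub>R J4) = p" using p by (simp add: J4_scale Pf_mk power2_eq_square[symmetric])
  then have "(- sqrt p) *\<^sub>R J4 \<in> S4" using p by (simp add: J4_scale mk_S4)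
  then show ?thesis using JMinus by (simp add: orbit_scaleJ_neg)
next
  case (APlus p q)
  then have p: "p \<noteq> 0" using assms by simp
  show ?thesis using APlus orbit_NFm[OF p, of q] by simp
next
  case (AMinus p q)
  then have p: "p < 0" using assms by simp
  have "orbit (NFm p q) = {A \<in> S4. Pf A = p \<and> strace A = q}"
  proof -
    have "A \<noteq> c *\<^sub>R J4" if "Pf A = p" for A c
    proof
      assume "A = c *\<^sub>R J4"
      then have "Pf A = c^2" by (simp add: J4_scale Pf_mk power2_eq_square)
      then show False using that p by (simp add: not_less[symmetric])
    qed
    then show ?thesis using orbit_NFm[of p q] p by (auto simp del: scaleR_minus_left simp: scaleR_minus_left[symmetric])
  qed
  then show ?thesis using AMinus orbit_NFm[of p q] p by simp
qed


lemma C: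
  assumes "A \<in> S4"
  shows "\<exists>l. valid_label l \<and> A \<in> orbit_set l"
proof -
  have p0: "Pf A \<noteq> 0" by (rule Pf_nz[OF assms])
  show ?thesis
  proof (cases "Pf A < 0")
    case True
    then show ?thesis using assms by (intro exI[of _ "AMinus (Pf A) (strace A)"]) simp
  next
    case False
    then have pp: "Pf A > 0" using p0 by simp
    show ?thesis
    proof (cases "A = sqrt (Pf A) *\<^sub>R J4")
      case True
      then show ?thesis using pp by (intro exI[of _ "JPlus (Pf A)"]) simp
    next
      case F1: False
      show ?thesis
      proof (cases "A = - (sqrt (Pf A) *\<^sub>R J4)")
        case True
        then show ?thesis using pp by (intro exI[of _ "JMinus (Pf A)"]) simp
      next
        case False
        then show ?thesis using pp F1 assms by (intro exI[of _ "APlus (Pf A) (strace A)"]) simp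
      qed
    qed
  qed
qed

lemma nf_in: "valid_label l \<Longrightarrow> nf l \<in> orbit_set l"
  using L[of l] orbit_self[of "nf l"] by simp

lemma Pf_NFm: "Pf (NFm p q) = p" by (simp add: NFm_def Pf_mk power2_eq_square field_simps)
lemma strace_NFm: "strace (NFm p q) = q" by (simp add: NFm_def strace_mk)
lemma NFm_03: "NFm p q $0$3 = 1" by (simp add: NFm_def)
lemma Pf_sJ: "Pf (c *\<^sub>R J4) = c^2" by (simp add: J4_scale Pf_mk power2_eq_square)
lemma sJ_01: "(c *\<^sub>R J4)$0$1 = c" by (simp add: J4_e)
lemma sJ_03: "(c *\<^sub>R J4)$0$3 = 0" by (simp add: J4_e)

lemma NFm_ne: "NFm p q \<noteq> c *\<^sub>R J4"
proof
  assume "NFm p q = c *\<^sub>R J4"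
  then have "NFm p q $0$3 = (c *\<^sub>R J4)$0$3" by simp
  then show False by (simp add: NFm_03 J4_e)
qed

lemma J4_nz[simp]: "J4 \<noteq> 0"
proof
  assume "J4 = 0"
  then have "J4$0$1 = (0::mat4)$0$1" by simp
  then show False by (simp add: J4_e)
qed

lemma sJ_inj: "c *\<^sub>R J4 = c' *\<^sub>R J4 \<Longrightarrow> c = c'"
proof -
  assume "c *\<^sub>R J4 = c' *\<^sub>R J4"
  then have "(c *\<^sub>R J4)$0$1 = (c' *\<^sub>R J4)$0$1" by simp
  then show "c = c'" by (simp add: J4_e)
qed

lemma nf_unique:
  assumes "valid_label l" "valid_label l'" "nf l \<in> orbit_set l'"
  shows "l = l'"
proof (cases l)
  case (JPlus p)
  then have p: "p > 0" using assms by simp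
  have X: "nf l = sqrt p *\<^sub>R J4" using JPlus by simp
  have PX: "Pf (nf l) = p" using X p by (simp add: Pf_sJ)
  show ?thesis
  proof (cases l')
    case (JPlus p')
    then have "sqrt p *\<^sub>R J4 = sqrt p' *\<^sub>R J4" using assms(3) X by simp
    then have "sqrt p = sqrt p'" by (rule sJ_inj)
    then show ?thesis using JPlus \<open>l = orbit_label.JPlus p\<close> by simp
  next
    case (JMinus p')
    then have "sqrt p = - sqrt p'" using assms(3) X by (auto dest: sJ_inj simp del: scaleR_minus_left simp: scaleR_minus_left[symmetric])
    moreover have "sqrt p > 0" "sqrt p' > 0" using p JMinus assms(2) by auto
    ultimately show ?thesis by simp
  next
    case (APlus p' q')
    then show ?thesis using assms(3) X PX by auto
  next
    case (AMinus p' q')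
    then show ?thesis using assms(2,3) PX p by auto
  qed
next
  case (JMinus p)
  then have p: "p > 0" using assms by simp
  have X: "nf l = (- sqrt p) *\<^sub>R J4" using JMinus by simp
  have PX: "Pf (nf l) = p" using X p by (simp only: Pf_sJ) simp
  show ?thesis
  proof (cases l')
    case (JPlus p')
    then have "- sqrt p = sqrt p'" using assms(3) X by (auto dest: sJ_inj simp del: scaleR_minus_left)
    moreover have "sqrt p > 0" "sqrt p' > 0" using p JPlus assms(2) by auto
    ultimately show ?thesis by simp
  next
    case (JMinus p')
    then have "- sqrt p = - sqrt p'" using assms(3) X by (auto dest: sJ_inj simp del: scaleR_minus_left simp: scaleR_minus_left[symmetric])
    then show ?thesis using JMinus \<open>l = orbit_label.JMinus p\<close> by simp
  next
    case (APlus p' q')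
    then show ?thesis using assms(3) X PX by (auto simp del: scaleR_minus_left simp: scaleR_minus_left[symmetric])
  next
    case (AMinus p' q')
    then show ?thesis using assms(2,3) PX p by auto
  qed
next
  case (APlus p q)
  then have p: "p > 0" using assms by simp
  have X: "nf l = NFm p q" using APlus by simp
  show ?thesis
  proof (cases l')
    case (JPlus p')
    then show ?thesis using assms(3) X NFm_ne by auto
  next
    case (JMinus p')
    then show ?thesis using assms(3) X NFm_ne[of p q "- sqrt p'"] by auto
  next
    case (APlus p' q')
    then show ?thesis using assms(3) X APlus \<open>l = orbit_label.APlus p q\<close> by (auto simp: Pf_NFm strace_NFm)
  next
    case (AMinus p' q')
    then show ?thesis using assms(2,3) X p by (auto simp: Pf_NFm)
  qed
next
  case (AMinus p q)
  then have p: "p < 0" using assms by simp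
  have X: "nf l = NFm p q" using AMinus by simp
  show ?thesis
  proof (cases l')
    case (JPlus p')
    then show ?thesis using assms(3) X NFm_ne by auto
  next
    case (JMinus p')
    then show ?thesis using assms(3) X NFm_ne[of p q "- sqrt p'"] by auto
  next
    case (APlus p' q')
    then show ?thesis using assms(2,3) X p by (auto simp: Pf_NFm)
  next
    case (AMinus p' q')
    then show ?thesis using assms(3) X AMinus \<open>l = orbit_label.AMinus p q\<close> by (auto simp: Pf_NFm strace_NFm)
  qed
qed

theorem theorem2p2:
  shows "{orbit A | A. A \<in> S4} = orbit_set ` {l. valid_label l}
         \<and> inj_on orbit_set {l. valid_label l}"
proof
  show "{orbit A | A. A \<in> S4} = orbit_set ` {l. valid_label l}"
  proof (intro set_eqI iffI)
    fix X assume "X \<in> {orbit A | A. A \<in> S4}"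
    then obtain A where A: "A \<in> S4" "X = orbit A" by blast
    obtain l where l: "valid_label l" "A \<in> orbit_set l" using C[OF A(1)] by blast
    have "orbit_set l = orbit (nf l)" using L[OF l(1)] by simp
    then have "A \<in> orbit (nf l)" using l(2) by simp
    then have "orbit A = orbit_set l" using orbit_eq \<open>orbit_set l = orbit (nf l)\<close> by simp
    then show "X \<in> orbit_set ` {l. valid_label l}" using A(2) l(1) by blast
  next
    fix X assume "X \<in> orbit_set ` {l. valid_label l}"
    then obtain l where l: "valid_label l" "X = orbit_set l" by blast
    then have "nf l \<in> S4" "X = orbit (nf l)" using L[OF l(1)] by auto
    then show "X \<in> {orbit A | A. A \<in> S4}" by blast
  qed
next
  show "inj_on orbit_set {l. valid_label l}"
  proof (rule inj_onI)
    fix l l' assume "l \<in> {l. valid_label l}" "l' \<in> {l. valid_label l}" "orbit_set l = orbit_set l'"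
    then show "l = l'" using nf_in[of l] nf_unique[of l l'] by simp
  qed
qed

end
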